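(* Let $q$ be a prime power, $8\le n\le q$, $\alpha_1,\dots,\alpha_n\in\mathbb{F}_q$ distinct, $u_1,\dots,u_n\in\mathbb{F}_q^*$, and $H\in\mathbb{F}_q^{7\times n}$ with $H_{ab}=u_b\alpha_b^{a-1}$ (so $\ker H$ has distance $8$). Then the number of $e\in\mathbb{F}_q^n$ with $|e|=4$ for which there exists $e'\in\mathbb{F}_q^n$, $e'\ne e$, $|e'|\le 4$, $He'=He$, is at most $$\frac{(n-4)(n-5)(n-6)(n-7)}{24(q-1)^3}\cdot(q-1)^4\binom{n}{4}.$$
   Context: $|e|$ denotes the Hamming weight of $e\in\mathbb{F}_q^n$. *)

theory Defs
  imports Complex_Main "HOL-Library.Cardinality"
begin

text \<open>Vectors in F_q^n are functions from a finite index type 'n (with CARD('n) = n) to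
  the finite field 'a.\<close>

definition hamming_weight :: "('n::finite \<Rightarrow> 'a::zero) \<Rightarrow> nat" where
  "hamming_weight e = card {i. e i \<noteq> 0}"

text \<open>The parity check matrix H with rows a = 1..r (here indexed 0..r-1) and
  entries H_ab = u_b * alpha_b^(a-1); syndrome H e.\<close>

definition grs_syndrome ::
  "nat \<Rightarrow> ('n::finite \<Rightarrow> 'a::comm_ring_1) \<Rightarrow> ('n \<Rightarrow> 'a) \<Rightarrow> ('n \<Rightarrow> 'a) \<Rightarrow> nat \<Rightarrow> 'a" where
  "grs_syndrome r u \<alpha> e = (\<lambda>a. if a < r then (\<Sum>b\<in>UNIV. u b * \<alpha> b ^ a * e b) else 0)"

end

theory Submission
  imports Defs "HOL-Computational_Algebra.Polynomial"
begin

lemma small_support_zero: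
  fixes \<alpha> u c :: "'n::finite \<Rightarrow> 'a::field"
  assumes inj: "inj \<alpha>" and u: "\<And>b. u b \<noteq> 0"
    and cw: "\<And>a. a < r \<Longrightarrow> (\<Sum>b\<in>UNIV. u b * \<alpha> b ^ a * c b) = 0"
    and card: "card {i. c i \<noteq> 0} \<le> r"
  shows "c = (\<lambda>_. 0)"
proof (rule ccontr)
  assume "c \<noteq> (\<lambda>_. 0)"
  then obtain b0 where b0: "c b0 \<noteq> 0" by auto
  define S where "S = {i. c i \<noteq> 0}"
  have b0S: "b0 \<in> S" using b0 S_def by auto
  define p where "p = (\<Prod>b\<in>S-{b0}. [:- \<alpha> b, 1:])"
  have "degree p \<le> sum (degree \<circ> (\<lambda>b. [:- \<alpha> b, 1:])) (S-{b0})"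
    unfolding p_def by (rule degree_prod_sum_le) simp
  also have "\<dots> = card (S - {b0})" by simp
  also have "\<dots> = card S - 1" using b0S by simp
  finally have dg: "degree p \<le> card S - 1" .
  have "card S > 0" using b0S by (auto simp: card_gt_0_iff)
  then have deg: "degree p < r" using dg card unfolding S_def by linarith
  have pe: "poly p x = (\<Prod>b\<in>S-{b0}. (x - \<alpha> b))" for x
    unfolding p_def by (simp add: poly_prod)
  have "(\<Sum>b\<in>UNIV. u b * c b * poly p (\<alpha> b))
      = (\<Sum>b\<in>UNIV. \<Sum>k\<le>degree p. coeff p k * (u b * \<alpha> b ^ k * c b))"
    by (simp add: poly_altdef sum_distrib_left mult_ac)
  also have "\<dots> = (\<Sum>k\<le>degree p. coeff p k * (\<Sum>b\<in>UNIV. u b * \<alpha> b ^ k * c b))"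
    by (subst sum.swap) (simp add: sum_distrib_left)
  also have "\<dots> = 0" using cw deg by (intro sum.neutral) auto
  finally have key: "(\<Sum>b\<in>UNIV. u b * c b * poly p (\<alpha> b)) = 0" .
  have "(\<Sum>b\<in>UNIV. u b * c b * poly p (\<alpha> b)) = u b0 * c b0 * poly p (\<alpha> b0)
      + (\<Sum>b\<in>UNIV-{b0}. u b * c b * poly p (\<alpha> b))"
    by (simp add: sum.remove)
  also have "(\<Sum>b\<in>UNIV-{b0}. u b * c b * poly p (\<alpha> b)) = 0"
  proof (intro sum.neutral ballI)
    fix b assume "b \<in> UNIV - {b0}"
    show "u b * c b * poly p (\<alpha> b) = 0"
    proof (cases "c b = 0")
      case False
      then have "b \<in> S - {b0}" using \<open>b \<in> UNIV - {b0}\<close> S_def by auto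
      then have "poly p (\<alpha> b) = 0" unfolding pe
        by (intro prod_zero) (auto simp: S_def)
      then show ?thesis by simp
    qed simp
  qed
  finally have "u b0 * c b0 * poly p (\<alpha> b0) = 0" using key by simp
  moreover have "poly p (\<alpha> b0) \<noteq> 0" unfolding pe
    using inj by (auto simp: inj_eq)
  ultimately show False using u b0 by simp
qed

lemma one_dim:
  fixes \<alpha> u c d :: "'n::finite \<Rightarrow> 'a::field"
  assumes inj: "inj \<alpha>" and u: "\<And>b. u b \<noteq> 0"
    and cwc: "\<And>a. a < r \<Longrightarrow> (\<Sum>b\<in>UNIV. u b * \<alpha> b ^ a * c b) = 0"
    and cwd: "\<And>a. a < r \<Longrightarrow> (\<Sum>b\<in>UNIV. u b * \<alpha> b ^ a * d b) = 0"
    and W: "card W \<le> Suc r" and sc: "{i. c i \<noteq> 0} \<subseteq> W" and sd: "{i. d i \<noteq> 0} \<subseteq> W"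
    and c0: "c \<noteq> (\<lambda>_. 0)"
  shows "\<exists>l. d = (\<lambda>i. l * c i)"
proof -
  obtain b0 where b0: "c b0 \<noteq> 0" using c0 by auto
  define l where "l = d b0 / c b0"
  define f where "f = (\<lambda>i. d i - l * c i)"
  have "\<And>a. a < r \<Longrightarrow> (\<Sum>b\<in>UNIV. u b * \<alpha> b ^ a * f b) = 0"
  proof -
    fix a assume "a < r"
    have "(\<Sum>b\<in>UNIV. u b * \<alpha> b ^ a * f b) = (\<Sum>b\<in>UNIV. u b * \<alpha> b ^ a * d b)
       - l * (\<Sum>b\<in>UNIV. u b * \<alpha> b ^ a * c b)"
      by (simp add: f_def sum_subtractf sum_distrib_left algebra_simps)
    then show "(\<Sum>b\<in>UNIV. u b * \<alpha> b ^ a * f b) = 0" using cwc cwd \<open>a < r\<close> by simp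
  qed
  moreover have fs: "{i. f i \<noteq> 0} \<subseteq> W - {b0}"
  proof
    fix x assume "x \<in> {i. f i \<noteq> 0}"
    then have "d x \<noteq> 0 \<or> c x \<noteq> 0" "x \<noteq> b0" using b0 by (auto simp: f_def l_def)
    then show "x \<in> W - {b0}" using sc sd by auto
  qed
  then have "card {i. f i \<noteq> 0} \<le> r"
  proof -
    have "b0 \<in> W" using b0 sc by auto
    have "card {i. f i \<noteq> 0} \<le> card (W - {b0})" using fs by (intro card_mono) auto
    also have "\<dots> = card W - 1" using \<open>b0 \<in> W\<close> by simp
    finally show ?thesis using W by linarith
  qed
  ultimately have "f = (\<lambda>_. 0)" using small_support_zero[of \<alpha> u r f, OF inj u] by blast
  then show ?thesis unfolding f_def by (auto simp: fun_eq_iff)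
qed

lemma f4: "fact 4 = (24::nat)" by (simp add: numeral_eq_Suc)
lemma fk: "fact (Suc (Suc (Suc (Suc k)))) = Suc(Suc(Suc(Suc k)))*(Suc(Suc(Suc k))*(Suc(Suc k)*(Suc k*(fact k::nat))))"
  by (simp only: fact_Suc of_nat_id)
lemma choose4: "real (m choose 4) * 24 = real m * (real m - 1) * (real m - 2) * (real m - 3)"
  if "4 \<le> m" for m :: nat
proof -
  define k where "k = m - 4"
  have k: "m = Suc (Suc (Suc (Suc k)))" using that unfolding k_def by arith
  have "fact 4 * fact (m - 4) * (m choose 4) = (fact m :: nat)"
    using binomial_fact_lemma[of 4 m] that by simp
  then have "fact k * (24 * (m choose 4)) = fact k * (Suc(Suc(Suc(Suc k)))*(Suc(Suc(Suc k))*(Suc(Suc k)*(Suc k))))"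
  proof -
    from \<open>fact 4 * fact (m - 4) * (m choose 4) = (fact m :: nat)\<close>
    have H: "24 * fact k * (m choose 4) = Suc(Suc(Suc(Suc k)))*(Suc(Suc(Suc k))*(Suc(Suc k)*(Suc k*(fact k::nat))))"
      unfolding f4 k_def[symmetric] by (subst (asm) k, subst (asm) fk)
    show ?thesis using H by (simp only: mult_ac)
  qed
  then have "24 * (m choose 4) = (Suc(Suc(Suc(Suc k)))*(Suc(Suc(Suc k))*(Suc(Suc k)*(Suc k))))"
    by (simp only: mult_cancel_left fact_nonzero simp_thms)
  then have "real (24 * (m choose 4)) = real (Suc(Suc(Suc(Suc k)))*(Suc(Suc(Suc k))*(Suc(Suc k)*(Suc k))))" by (simp only:)
  then show ?thesis unfolding k by (simp add: algebra_simps)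
qed
theorem mainTheorem13:
  fixes \<alpha> u :: "'n::finite \<Rightarrow> 'a::{field,finite}"
  assumes "8 \<le> CARD('n)" and "CARD('n) \<le> CARD('a)"
    and "inj \<alpha>"
    and "\<And>b. u b \<noteq> 0"
  shows "real (card {e :: 'n \<Rightarrow> 'a. hamming_weight e = 4 \<and>
            (\<exists>e'. e' \<noteq> e \<and> hamming_weight e' \<le> 4 \<and>
                  grs_syndrome 7 u \<alpha> e' = grs_syndrome 7 u \<alpha> e)})
    \<le> (real (CARD('n) - 4) * real (CARD('n) - 5) * real (CARD('n) - 6) * real (CARD('n) - 7))
        / (24 * (real CARD('a) - 1) ^ 3)
      * (real CARD('a) - 1) ^ 4 * real (CARD('n) choose 4)"
proof -
  let ?n = "CARD('n)" and ?q = "CARD('a)"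
  let ?syn = "grs_syndrome 7 u \<alpha>"
  define cwp where "cwp = (\<lambda>c :: 'n \<Rightarrow> 'a. \<forall>a<7. (\<Sum>b\<in>UNIV. u b * \<alpha> b ^ a * c b) = 0)"
  define cw where "cw = (\<lambda>W. SOME c. (c :: 'n \<Rightarrow> 'a) \<noteq> (\<lambda>_. 0) \<and> cwp c \<and> {i. c i \<noteq> 0} \<subseteq> W)"
  define g where "g = (\<lambda>((S, T), l :: 'a). (\<lambda>i. if i \<in> S then l * cw (S \<union> T) i else 0))"
  define P where "P = Sigma {S :: 'n set. card S = 4} (\<lambda>S. {T. T \<subseteq> UNIV - S \<and> card T = 4})"
  define D where "D = P \<times> (UNIV - {0 :: 'a})"
  define E where "E = {e :: 'n \<Rightarrow> 'a. hamming_weight e = 4 \<and>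
            (\<exists>e'. e' \<noteq> e \<and> hamming_weight e' \<le> 4 \<and> ?syn e' = ?syn e)}"
  have sub: "E \<subseteq> g ` D"
  proof
    fix e assume "e \<in> E"
    then obtain e' where we: "hamming_weight e = 4" and ne: "e' \<noteq> e"
      and we': "hamming_weight e' \<le> 4" and syn: "?syn e' = ?syn e"
      unfolding E_def by blast
    define c where "c = (\<lambda>i. e i - e' i)"
    define S where "S = {i. e i \<noteq> 0}"
    define T where "T = {i. e' i \<noteq> 0}"
    have cS: "card S = 4" using we by (simp add: S_def hamming_weight_def)
    have cT: "card T \<le> 4" using we' by (simp add: T_def hamming_weight_def)
    have cwc: "cwp c"
      unfolding cwp_def
    proof (intro allI impI)
      fix a :: nat assume "a < 7"
      have "(\<Sum>b\<in>UNIV. u b * \<alpha> b ^ a * e' b) = (\<Sum>b\<in>UNIV. u b * \<alpha> b ^ a * e b)"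
        using fun_cong[OF syn, of a] \<open>a < 7\<close> by (simp add: grs_syndrome_def)
      then show "(\<Sum>b\<in>UNIV. u b * \<alpha> b ^ a * c b) = 0"
        by (simp add: c_def right_diff_distrib sum_subtractf)
    qed
    have c0: "c \<noteq> (\<lambda>_. 0)" using ne by (auto simp: c_def fun_eq_iff) metis
    have suppc: "{i. c i \<noteq> 0} \<subseteq> S \<union> T" by (auto simp: c_def S_def T_def)
    have "\<not> card {i. c i \<noteq> 0} \<le> 7"
    proof
      assume "card {i. c i \<noteq> 0} \<le> 7"
      then have "c = (\<lambda>_. 0)" using small_support_zero[of \<alpha> u 7 c, OF assms(3,4)] cwc
        unfolding cwp_def by blast
      then show False using c0 by simp
    qed
    then have c8: "8 \<le> card {i. c i \<noteq> 0}" by simp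
    have "card {i. c i \<noteq> 0} \<le> card (S \<union> T)" using suppc by (intro card_mono) auto
    also have "\<dots> \<le> card S + card T" by (rule card_Un_le)
    finally have cT4: "card T = 4" and cU: "card (S \<union> T) = card S + card T"
      using c8 cS cT \<open>card (S \<union> T) \<le> card S + card T\<close> \<open>card {i. c i \<noteq> 0} \<le> card (S \<union> T)\<close>
      by linarith+
    have disj: "S \<inter> T = {}"
      using cU card_Un_Int[of S T] by (simp add: card_eq_0_iff)
    have cardW: "card (S \<union> T) \<le> Suc 7" using cU cS cT4 by simp
    have ex: "\<exists>c. c \<noteq> (\<lambda>_. 0) \<and> cwp c \<and> {i. c i \<noteq> 0} \<subseteq> S \<union> T"
      using c0 cwc suppc by blast
    have cwW: "cw (S \<union> T) \<noteq> (\<lambda>_. 0)" "cwp (cw (S \<union> T))" "{i. cw (S \<union> T) i \<noteq> 0} \<subseteq> S \<union> T"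
      using someI_ex[OF ex] unfolding cw_def by blast+
    obtain l where l: "c = (\<lambda>i. l * cw (S \<union> T) i)"
      using one_dim[of \<alpha> u 7 "cw (S \<union> T)" c "S \<union> T", OF assms(3,4)] cwW cwc cardW suppc
      unfolding cwp_def by blast
    have l0: "l \<noteq> 0" using l c0 by auto
    have "e = g ((S, T), l)"
    proof
      fix i
      show "e i = g ((S, T), l) i"
      proof (cases "i \<in> S")
        case True
        then have "e' i = 0" using disj T_def by auto
        have "c i = l * cw (S \<union> T) i" using l by simp
        then have "e i = l * cw (S \<union> T) i" using \<open>e' i = 0\<close> by (simp add: c_def)
        then show ?thesis using True by (simp add: g_def)
      next
        case False
        then show ?thesis by (simp add: g_def S_def)
      qed
    qed
    moreover have "((S, T), l) \<in> D"
      using cS cT4 disj l0 by (auto simp: D_def P_def)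
    ultimately show "e \<in> g ` D" by blast
  qed
  have "card E \<le> card (g ` D)" using sub by (intro card_mono) auto
  also have "\<dots> \<le> card D" by (rule card_image_le) simp
  also have "card D = card P * (?q - 1)"
    by (simp add: D_def card_cartesian_product card_Diff_subset)
  also have "card P = (\<Sum>S\<in>{S :: 'n set. card S = 4}. card {T. T \<subseteq> UNIV - S \<and> card T = 4})"
    unfolding P_def by (rule card_SigmaI) auto
  also have "\<dots> = (\<Sum>S\<in>{S :: 'n set. card S = 4}. (?n - 4) choose 4)"
  proof (rule sum.cong)
    fix S :: "'n set" assume "S \<in> {S. card S = 4}"
    then have "card (UNIV - S) = ?n - 4" by (simp add: card_Diff_subset)
    then show "card {T. T \<subseteq> UNIV - S \<and> card T = 4} = (?n - 4) choose 4"
      using n_subsets[of "UNIV - S" 4] by simp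
  qed simp
  also have "\<dots> = (?n choose 4) * ((?n - 4) choose 4)"
    using n_subsets[of "UNIV :: 'n set" 4] by simp
  finally have bound: "card E \<le> (?n choose 4) * ((?n - 4) choose 4) * (?q - 1)" by simp
  have q1: "real ?q - 1 > 0" using assms(1,2) by linarith
  have ch: "real ((?n - 4) choose 4) * 24 = real (?n - 4) * real (?n - 5) * real (?n - 6) * real (?n - 7)"
    using choose4[of "?n - 4"] assms(1) by (simp add: of_nat_diff)
  have h1: "real (card E) \<le> real ((?n choose 4) * ((?n - 4) choose 4) * (?q - 1))"
    using bound by (simp only: of_nat_le_iff)
  have h2: "real (?q - 1) = real ?q - 1" using q1 by (simp add: of_nat_diff)
  define x where "x = real ?q - 1"
  define A where "A = real (?n - 4) * real (?n - 5) * real (?n - 6) * real (?n - 7)"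
  have x0: "x \<noteq> 0" using q1 x_def by simp
  have e1: "A / (24 * x ^ 3) * x ^ 4 * real (?n choose 4)
      = A / 24 * real (?n choose 4) * (x ^ 4 / x ^ 3)" by (simp add: field_simps)
  have e2: "x ^ 4 / x ^ 3 = x" using x0 by (simp add: power_Suc numeral_eq_Suc)
  have e3: "A / 24 = real ((?n - 4) choose 4)" using ch A_def by simp
  have h3: "A / (24 * x ^ 3) * x ^ 4 * real (?n choose 4)
      = real ((?n - 4) choose 4) * real (?n choose 4) * x"
    using e1 e2 e3 by simp
  have "real (card E) \<le> A / (24 * x ^ 3) * x ^ 4 * real (?n choose 4)"
    using h1 h2 h3 x_def by (simp add: mult.commute)
  then show ?thesis unfolding E_def A_def x_def .
qed

end
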